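(* Assume $L$ satisfies (L1),(L2) and $W$ satisfies (W1)–(W6) (as in the context), and let $\varrho>0$. Then there exists $\rho>\varrho$ such that $\sup_{u\in\partial Q}I(u)\le0$, where $$Q=\{\zeta e_{\bar n+1}:0\le\zeta\le\rho\}\oplus\{u\in E^-\oplus E^0:\|u\|\le\rho\}$$ and $\partial Q$ is the boundary of $Q$ relative to the finite-dimensional space $\operatorname{span}\{e_{\bar n+1}\}\oplus E^-\oplus E^0$, i.e. $\partial Q=\{u\in E^-\oplus E^0:\|u\|\le\rho\}\cup\big(\rho e_{\bar n+1}+\{u\in E^-\oplus E^0:\|u\|\le\rho\}\big)\cup\big(\{\zeta e_{\bar n+1}:0\le\zeta\le\rho\}+\{u\in E^-\oplus E^0:\|u\|=\rho\}\big)$.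
   Context: $L\in C(\mathbb{R},\mathbb{R}^{N\times N})$ symmetric-matrix valued, $W\in C^1(\mathbb{R}\times\mathbb{R}^N,\mathbb{R})$, $\nabla W$ the gradient in $x$, $\widetilde W(t,x)=2W(t,x)-(\nabla W(t,x),x)$, $l(t)=\min_{|x|=1}(L(t)x,x)$. (L1): $\exists\,\alpha>1,M>0$ with $\lim_{R\to\infty}\operatorname{meas}\{t:|t|\ge R,\ l(t)\le M|t|\ln^\alpha|t|\}=0$. (L2): $\exists L_0>0$ with $(L(t)x,x)\ge-L_0|x|^2$. $\mathcal{H}$ is the self-adjoint extension in $L^2(\mathbb{R},\mathbb{R}^N)$ of $-\frac{d^2}{dt^2}+L(t)$, with eigenvalues $\lambda_1\le\lambda_2\le\cdots\to\infty$ and eigenfunctions $e_n$ ($\mathcal{H}e_n=\lambda_ne_n$) forming an orthogonal basis of $L^2$; $\bar n$ is the number of nonpositive eigenvalues. $E=\mathfrak{D}(|\mathcal{H}|^{1/2})$, $E=E^-\oplus E^0\oplus E^+$ (spans of eigenfunctions with negative, zero, positive eigenvalues; $E^-\oplus E^0$ finite dimensional), norm $\|u\|^2=\||\mathcal{H}|^{1/2}u\|_{L^2}^2+\|u^0\|_{L^2}^2$. $I(u)=\frac12\|u^+\|^2-\frac12\|u^-\|^2-\int_{\mathbb{R}}W(t,u(t))\,dt$. (W1) $W(t,0)=0$, $|\nabla W(t,x)|\le b_1|x|$. (W2) $\widetilde W(t,x)\ge b_2|x|^\mu$ for $|x|\ge r_1$, with $b_2,r_1>0,\mu>1$. (W3)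 $\widetilde W(t,x)\ge-b_3|x|$ for $|x|<r_1$, $b_3>0$. (W4) $|W(t,x)|\le\frac{\lambda_{\bar n+1}-\sigma_0}{2}|x|^2$ for $|x|\le r_2$, $r_2,\sigma_0>0$. (W5) $W(t,x)\ge(\frac{\lambda_{\bar n+1}}2+\varepsilon_0)|x|^2$ for $|x|\ge r_\infty$, $\varepsilon_0,r_\infty>0$. (W6) $W\ge0$. All for all $t\in\mathbb{R}$. *)

theory Defs
  imports "HOL-Analysis.Analysis"
begin

text \<open>Setting: functions t \<mapsto> u(t) from the real line into R^N, R^N rendered as real^'N.
  Eigenvalues/eigenfunctions are indexed from 0, so the paper's e_{k} is our e (k-1).\<close>

definition lmin :: "(real \<Rightarrow> real^'N^'N) \<Rightarrow> real \<Rightarrow> real" where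
  "lmin L t = Inf {(L t *v x) \<bullet> x | x. norm x = 1}"

definition cond_L1 :: "(real \<Rightarrow> real^'N^'N) \<Rightarrow> bool" where
  "cond_L1 L \<longleftrightarrow> (\<exists>\<alpha>>1. \<exists>M>0.
     ((\<lambda>R. emeasure lborel {t. \<bar>t\<bar> \<ge> R \<and> lmin L t \<le> M * \<bar>t\<bar> * (ln \<bar>t\<bar>) powr \<alpha>})
        \<longlongrightarrow> 0) at_top)"

definition cond_L2 :: "(real \<Rightarrow> real^'N^'N) \<Rightarrow> bool" where
  "cond_L2 L \<longleftrightarrow> (\<exists>L0>0. \<forall>t x. (L t *v x) \<bullet> x \<ge> - L0 * (norm x)\<^sup>2)"

definition L2fun :: "(real \<Rightarrow> real^'N) \<Rightarrow> bool" where
  "L2fun u \<longleftrightarrow> u \<in> borel_measurable lborel \<and> integrable lborel (\<lambda>t. (norm (u t))\<^sup>2)"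

definition eigenfun :: "(real \<Rightarrow> real^'N^'N) \<Rightarrow> real \<Rightarrow> (real \<Rightarrow> real^'N) \<Rightarrow> bool" where
  "eigenfun L \<mu> e \<longleftrightarrow> L2fun e \<and>
     (\<exists>e' e''. \<forall>t. (e has_vector_derivative e' t) (at t) \<and>
                   (e' has_vector_derivative e'' t) (at t) \<and>
                   - e'' t + L t *v e t = \<mu> *\<^sub>R e t)"

definition coef :: "(nat \<Rightarrow> real \<Rightarrow> real^'N) \<Rightarrow> (real \<Rightarrow> real^'N) \<Rightarrow> nat \<Rightarrow> real" where
  "coef e u n = (LINT t|lborel. e n t \<bullet> u t)"

definition eigen_system ::
  "(real \<Rightarrow> real^'N^'N) \<Rightarrow> (nat \<Rightarrow> real) \<Rightarrow> (nat \<Rightarrow> real \<Rightarrow> real^'N) \<Rightarrow> bool" where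
  "eigen_system L lam e \<longleftrightarrow>
     (\<forall>n. eigenfun L (lam n) (e n)) \<and>
     (\<forall>m n. (LINT t|lborel. e m t \<bullet> e n t) = (if m = n then 1 else 0)) \<and>
     (\<forall>u. L2fun u \<longrightarrow> (\<lambda>n. (coef e u n)\<^sup>2) sums (LINT t|lborel. (norm (u t))\<^sup>2)) \<and>
     mono lam \<and> filterlim lam at_top sequentially"

definition nbar :: "(nat \<Rightarrow> real) \<Rightarrow> nat" where
  "nbar lam = card {n. lam n \<le> 0}"

definition Eminus0 :: "(nat \<Rightarrow> real) \<Rightarrow> (nat \<Rightarrow> real \<Rightarrow> real^'N) \<Rightarrow> (real \<Rightarrow> real^'N) set" where
  "Eminus0 lam e = {(\<lambda>t. \<Sum>n\<in>{n. lam n \<le> 0}. a n *\<^sub>R e n t) | a. True}"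

text \<open>\<parallel>u\<parallel>^2 = \<parallel>|H|^{1/2} u\<parallel>^2_{L^2} + \<parallel>u^0\<parallel>^2_{L^2}, expressed in eigen-coordinates.\<close>
definition Enorm :: "(nat \<Rightarrow> real) \<Rightarrow> (nat \<Rightarrow> real \<Rightarrow> real^'N) \<Rightarrow> (real \<Rightarrow> real^'N) \<Rightarrow> real" where
  "Enorm lam e u = sqrt ((\<Sum>n. \<bar>lam n\<bar> * (coef e u n)\<^sup>2)
                        + (\<Sum>n. if lam n = 0 then (coef e u n)\<^sup>2 else 0))"

definition Enorm_plus_sq :: "(nat \<Rightarrow> real) \<Rightarrow> (nat \<Rightarrow> real \<Rightarrow> real^'N) \<Rightarrow> (real \<Rightarrow> real^'N) \<Rightarrow> real" where
  "Enorm_plus_sq lam e u = (\<Sum>n. if lam n > 0 then lam n * (coef e u n)\<^sup>2 else 0)"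

definition Enorm_minus_sq :: "(nat \<Rightarrow> real) \<Rightarrow> (nat \<Rightarrow> real \<Rightarrow> real^'N) \<Rightarrow> (real \<Rightarrow> real^'N) \<Rightarrow> real" where
  "Enorm_minus_sq lam e u = (\<Sum>n. if lam n < 0 then \<bar>lam n\<bar> * (coef e u n)\<^sup>2 else 0)"

definition Ifun :: "(nat \<Rightarrow> real) \<Rightarrow> (nat \<Rightarrow> real \<Rightarrow> real^'N) \<Rightarrow> (real \<Rightarrow> real^'N \<Rightarrow> real)
                    \<Rightarrow> (real \<Rightarrow> real^'N) \<Rightarrow> real" where
  "Ifun lam e W u = 1/2 * Enorm_plus_sq lam e u - 1/2 * Enorm_minus_sq lam e u
                    - (LINT t|lborel. W t (u t))"

definition boundaryQ :: "(nat \<Rightarrow> real) \<Rightarrow> (nat \<Rightarrow> real \<Rightarrow> real^'N) \<Rightarrow> real \<Rightarrow> (real \<Rightarrow> real^'N) set" where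
  "boundaryQ lam e \<rho> =
     {v \<in> Eminus0 lam e. Enorm lam e v \<le> \<rho>}
   \<union> {(\<lambda>t. \<rho> *\<^sub>R e (nbar lam) t + v t) | v. v \<in> Eminus0 lam e \<and> Enorm lam e v \<le> \<rho>}
   \<union> {(\<lambda>t. \<zeta> *\<^sub>R e (nbar lam) t + v t) | \<zeta> v. 0 \<le> \<zeta> \<and> \<zeta> \<le> \<rho> \<and>
                                         v \<in> Eminus0 lam e \<and> Enorm lam e v = \<rho>}"

definition C1_with_grad :: "(real \<Rightarrow> real^'N \<Rightarrow> real) \<Rightarrow> (real \<Rightarrow> real^'N \<Rightarrow> real^'N) \<Rightarrow> bool" where
  "C1_with_grad W gradW \<longleftrightarrow> (\<exists>Wt.
     continuous_on UNIV (\<lambda>(t, x). Wt t x) \<and> continuous_on UNIV (\<lambda>(t, x). gradW t x) \<and>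
     (\<forall>t x. ((\<lambda>(s, y). W s y) has_derivative (\<lambda>(s, h). s * Wt t x + gradW t x \<bullet> h)) (at (t, x))))"

definition Wtilde :: "(real \<Rightarrow> real^'N \<Rightarrow> real) \<Rightarrow> (real \<Rightarrow> real^'N \<Rightarrow> real^'N) \<Rightarrow> real \<Rightarrow> real^'N \<Rightarrow> real" where
  "Wtilde W gradW t x = 2 * W t x - gradW t x \<bullet> x"

end

theory Submission imports Defs begin

lemma L2_meas: "L2fun f \<Longrightarrow> f \<in> borel_measurable lborel"
  by (simp add: L2fun_def)

lemma int_inner:
  fixes f g :: "real \<Rightarrow> real^'N"
  assumes "L2fun f" "L2fun g"
  shows "integrable lborel (\<lambda>t. f t \<bullet> g t)"
proof (rule Bochner_Integration.integrable_bound[where f="\<lambda>t. (norm (f t))\<^sup>2 + (norm (g t))\<^sup>2"])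
  show "integrable lborel (\<lambda>t. (norm (f t))\<^sup>2 + (norm (g t))\<^sup>2)"
    using assms by (simp add: L2fun_def)
  show "(\<lambda>t. f t \<bullet> g t) \<in> borel_measurable lborel"
    using assms unfolding L2fun_def by (metis borel_measurable_inner)
  show "AE t in lborel. norm (f t \<bullet> g t) \<le> norm ((norm (f t))\<^sup>2 + (norm (g t))\<^sup>2)"
  proof (intro AE_I2)
    fix t
    have "\<bar>f t \<bullet> g t\<bar> \<le> norm (f t) * norm (g t)" by (rule Cauchy_Schwarz_ineq2)
    also have "\<dots> \<le> (norm (f t))\<^sup>2 + (norm (g t))\<^sup>2"
      using sum_squares_bound[of "norm (f t)" "norm (g t)"] mult_nonneg_nonneg[OF norm_ge_zero norm_ge_zero, of "f t" "g t"] by linarith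
    finally show "norm (f t \<bullet> g t) \<le> norm ((norm (f t))\<^sup>2 + (norm (g t))\<^sup>2)" by simp
  qed
qed

lemma coef_sum:
  fixes e :: "nat \<Rightarrow> real \<Rightarrow> real^'N"
  assumes orth: "\<forall>m n. (LINT t|lborel. e m t \<bullet> e n t) = (if m = n then 1 else 0)"
    and L2: "\<forall>n. L2fun (e n)" and fin: "finite S"
  shows "coef e (\<lambda>t. \<Sum>j\<in>S. b j *\<^sub>R e j t) n = (if n \<in> S then b n else 0)"
proof -
  have "coef e (\<lambda>t. \<Sum>j\<in>S. b j *\<^sub>R e j t) n = (LINT t|lborel. (\<Sum>j\<in>S. b j * (e n t \<bullet> e j t)))"
    unfolding coef_def by (simp add: inner_sum_right)
  also have "\<dots> = (\<Sum>j\<in>S. LINT t|lborel. b j * (e n t \<bullet> e j t))"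
    by (rule Bochner_Integration.integral_sum) (use int_inner L2 in auto)
  also have "\<dots> = (\<Sum>j\<in>S. b j * (if n = j then 1 else 0))"
    using orth by simp
  also have "\<dots> = (if n \<in> S then b n else 0)"
    using fin by (simp add: sum.delta' if_distrib cong: if_cong)
  finally show ?thesis .
qed

lemma norm2_sum:
  fixes e :: "nat \<Rightarrow> real \<Rightarrow> real^'N"
  assumes orth: "\<forall>m n. (LINT t|lborel. e m t \<bullet> e n t) = (if m = n then 1 else 0)"
    and L2: "\<forall>n. L2fun (e n)" and fin: "finite S"
  shows "integrable lborel (\<lambda>t. (norm (\<Sum>j\<in>S. b j *\<^sub>R e j t))\<^sup>2)"
    "(LINT t|lborel. (norm (\<Sum>j\<in>S. b j *\<^sub>R e j t))\<^sup>2) = (\<Sum>j\<in>S. (b j)\<^sup>2)"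
proof -
  have eq: "(norm (\<Sum>j\<in>S. b j *\<^sub>R e j t))\<^sup>2 = (\<Sum>i\<in>S. \<Sum>j\<in>S. b i * (b j * (e j t \<bullet> e i t)))" for t
    by (simp add: power2_norm_eq_inner inner_sum_left inner_sum_right sum_distrib_left mult.assoc)
  have int: "integrable lborel (\<lambda>t. b i * (b j * (e j t \<bullet> e i t)))" for i j
    using int_inner L2 by auto
  show "integrable lborel (\<lambda>t. (norm (\<Sum>j\<in>S. b j *\<^sub>R e j t))\<^sup>2)"
    unfolding eq using int by auto
  have "(LINT t|lborel. (norm (\<Sum>j\<in>S. b j *\<^sub>R e j t))\<^sup>2) = (\<Sum>i\<in>S. \<Sum>j\<in>S. LINT t|lborel. b i * (b j * (e j t \<bullet> e i t)))"
    unfolding eq using int by (simp add: Bochner_Integration.integral_sum)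
  also have "\<dots> = (\<Sum>i\<in>S. \<Sum>j\<in>S. b i * (b j * (if j = i then 1 else 0)))"
    using orth by simp
  also have "\<dots> = (\<Sum>j\<in>S. (b j)\<^sup>2)"
    using fin by (simp add: if_distrib sum.delta power2_eq_square cong: if_cong)
  finally show "(LINT t|lborel. (norm (\<Sum>j\<in>S. b j *\<^sub>R e j t))\<^sup>2) = (\<Sum>j\<in>S. (b j)\<^sup>2)" .
qed

lemma tail_lim:
  fixes f :: "real \<Rightarrow> real^'N"
  assumes "L2fun f"
  shows "(\<lambda>i::nat. LINT t|lborel. indicator {t. real i < \<bar>t\<bar>} t * (norm (f t))\<^sup>2) \<longlonglongrightarrow> 0"
proof -
  have m: "f \<in> borel_measurable lborel" and i: "integrable lborel (\<lambda>t. (norm (f t))\<^sup>2)"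
    using assms by (auto simp: L2fun_def)
  have m0: "(\<lambda>t. 0::real) \<in> borel_measurable lborel" by simp
  have ms: "(\<lambda>t. indicator {t. real i < \<bar>t\<bar>} t * (norm (f t))\<^sup>2) \<in> borel_measurable lborel" for i :: nat
    using m by measurable
  have lim: "AE t in lborel. (\<lambda>i::nat. indicator {t. real i < \<bar>t\<bar>} t * (norm (f t))\<^sup>2) \<longlonglongrightarrow> (0::real)"
  proof (intro AE_I2)
    fix t :: real
    obtain N :: nat where "\<bar>t\<bar> \<le> real N" using real_arch_simple by blast
    then have "\<forall>i\<ge>N. indicator {t. real i < \<bar>t\<bar>} t * (norm (f t))\<^sup>2 = (0::real)"
      by (auto simp: indicator_def)
    then show "(\<lambda>i. indicator {t. real i < \<bar>t\<bar>} t * (norm (f t))\<^sup>2) \<longlonglongrightarrow> (0::real)"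
      by (intro tendsto_eventually) (auto simp: eventually_sequentially)
  qed
  have bd: "AE t in lborel. norm (indicator {t. real i < \<bar>t\<bar>} t * (norm (f t))\<^sup>2) \<le> (norm (f t))\<^sup>2" for i :: nat
    by (intro AE_I2) (auto simp: indicator_def)
  show ?thesis
    using integral_dominated_convergence[OF m0 ms i lim bd] by simp
qed

lemma cs_point:
  fixes x :: "nat \<Rightarrow> real^'N"
  shows "(norm (\<Sum>j\<in>S. b j *\<^sub>R x j))\<^sup>2 \<le> (\<Sum>j\<in>S. (b j)\<^sup>2) * (\<Sum>j\<in>S. (norm (x j))\<^sup>2)"
proof -
  have "norm (\<Sum>j\<in>S. b j *\<^sub>R x j) \<le> (\<Sum>j\<in>S. \<bar>b j\<bar> * norm (x j))"
    by (rule order_trans[OF norm_sum]) simp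
  then have "(norm (\<Sum>j\<in>S. b j *\<^sub>R x j))\<^sup>2 \<le> (\<Sum>j\<in>S. \<bar>b j\<bar> * norm (x j))\<^sup>2"
    by (intro power_mono) auto
  also have "\<dots> \<le> (\<Sum>j\<in>S. \<bar>b j\<bar>\<^sup>2) * (\<Sum>j\<in>S. (norm (x j))\<^sup>2)"
    by (rule Cauchy_Schwarz_ineq_sum)
  finally show ?thesis by simp
qed

lemma W_cont:
  assumes "C1_with_grad W gradW"
  shows "continuous_on UNIV (case_prod W)"
proof -
  from assms obtain Wt where d: "\<forall>t x. ((\<lambda>(s, y). W s y) has_derivative (\<lambda>(s, h). s * Wt t x + gradW t x \<bullet> h)) (at (t, x))"
    unfolding C1_with_grad_def by blast
  have "isCont (case_prod W) p" for p
    using d has_derivative_continuous[of "case_prod W"] by (cases p) (metis case_prod_eta)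
  then show ?thesis by (simp add: continuous_at_imp_continuous_on)
qed

lemma W_meas:
  fixes W :: "real \<Rightarrow> real^'N \<Rightarrow> real"
  assumes "C1_with_grad W gradW" "u \<in> borel_measurable lborel"
  shows "(\<lambda>t. W t (u t)) \<in> borel_measurable lborel"
proof -
  have p: "(\<lambda>t. (t, u t)) \<in> borel_measurable lborel" using assms(2) by measurable
  have c: "case_prod W \<in> borel_measurable borel"
    by (rule borel_measurable_continuous_onI[OF W_cont[OF assms(1)]])
  show ?thesis using measurable_compose[OF p c] by simp
qed

lemma W_bound:
  fixes W :: "real \<Rightarrow> real^'N \<Rightarrow> real"
  assumes "C1_with_grad W gradW" "\<forall>t. W t 0 = 0" "\<forall>t x. norm (gradW t x) \<le> b1 * norm x"
  shows "\<bar>W t x\<bar> \<le> \<bar>b1\<bar> * (norm x)\<^sup>2"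
proof -
  from assms(1) obtain Wt where d: "\<forall>t x. ((\<lambda>(s, y). W s y) has_derivative (\<lambda>(s, h). s * Wt t x + gradW t x \<bullet> h)) (at (t, x))"
    unfolding C1_with_grad_def by blast
  have dy: "((\<lambda>y. W t y) has_derivative (\<lambda>h. gradW t y \<bullet> h)) (at y)" for y
  proof -
    have p: "((\<lambda>y. (t, y)) has_derivative (\<lambda>h. (0, h))) (at y)"
      by (auto intro!: derivative_eq_intros)
    have "(((\<lambda>(s, y). W s y) \<circ> (\<lambda>y. (t, y))) has_derivative ((\<lambda>(s, h). s * Wt t y + gradW t y \<bullet> h) \<circ> (\<lambda>h. (0, h)))) (at y)"
      using diff_chain_at[OF p] d by auto
    then show ?thesis by (simp add: o_def)
  qed
  let ?S = "cball (0::real^'N) (norm x)"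
  have "norm (W t x - W t 0) \<le> (\<bar>b1\<bar> * norm x) * norm (x - 0)"
  proof (rule differentiable_bound[where S="?S" and f'="\<lambda>y h. gradW t y \<bullet> h"])
    show "convex ?S" by simp
    show "((\<lambda>y. W t y) has_derivative (\<lambda>h. gradW t y \<bullet> h)) (at y within ?S)" for y
      using dy has_derivative_at_withinI by blast
    show "onorm (\<lambda>h. gradW t y \<bullet> h) \<le> \<bar>b1\<bar> * norm x" if "y \<in> ?S" for y
    proof (rule onorm_le)
      fix h
      have "norm (gradW t y \<bullet> h) \<le> norm (gradW t y) * norm h"
        using Cauchy_Schwarz_ineq2 by simp
      also have "norm (gradW t y) \<le> \<bar>b1\<bar> * norm x"
      proof -
        have "norm (gradW t y) \<le> b1 * norm y" using assms(3) by blast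
        also have "\<dots> \<le> \<bar>b1\<bar> * norm y" by (simp add: mult_right_mono)
        also have "\<dots> \<le> \<bar>b1\<bar> * norm x" using that by (simp add: mult_left_mono)
        finally show ?thesis .
      qed
      then have "norm (gradW t y) * norm h \<le> \<bar>b1\<bar> * norm x * norm h"
        by (simp add: mult_right_mono)
      finally show "norm (gradW t y \<bullet> h) \<le> \<bar>b1\<bar> * norm x * norm h" .
    qed
    show "x \<in> ?S" "0 \<in> ?S" by auto
  qed
  then show ?thesis using assms(2) by (simp add: power2_eq_square mult.assoc)
qed

lemma W_lower:
  fixes e :: "nat \<Rightarrow> real \<Rightarrow> real^'N" and W :: "real \<Rightarrow> real^'N \<Rightarrow> real"
  assumes orth: "\<forall>m n. (LINT t|lborel. e m t \<bullet> e n t) = (if m = n then 1 else 0)"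
    and L2: "\<forall>n. L2fun (e n)"
    and C1: "C1_with_grad W gradW" and W0: "\<forall>t. W t 0 = 0"
    and gb: "\<forall>t x. norm (gradW t x) \<le> b1 * norm x"
    and Wnn: "\<forall>t x. W t x \<ge> 0"
    and W5: "\<forall>t x. norm x \<ge> R \<longrightarrow> W t x \<ge> K * (norm x)\<^sup>2"
    and K: "K > 0" and T: "T \<ge> 0" and fin: "finite S"
  shows "(LINT t|lborel. W t (\<Sum>j\<in>S. b j *\<^sub>R e j t)) \<ge>
           K * (\<Sum>j\<in>S. (b j)\<^sup>2) - K * R\<^sup>2 * (2 * T)
           - K * (\<Sum>j\<in>S. (b j)\<^sup>2) * (\<Sum>j\<in>S. LINT t|lborel. indicator {t. T < \<bar>t\<bar>} t * (norm (e j t))\<^sup>2)"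
proof -
  define u where "u = (\<lambda>t. \<Sum>j\<in>S. b j *\<^sub>R e j t)"
  define s where "s = (\<Sum>j\<in>S. (b j)\<^sup>2)"
  define A where "A = {t::real. T < \<bar>t\<bar>}"
  define E where "E = (\<lambda>t. \<Sum>j\<in>S. (norm (e j t))\<^sup>2)"
  have s0: "s \<ge> 0" unfolding s_def by (simp add: sum_nonneg)
  have em: "e j \<in> borel_measurable lborel" for j using L2 by (simp add: L2fun_def)
  have um: "u \<in> borel_measurable lborel" unfolding u_def using em by measurable
  have iu: "integrable lborel (\<lambda>t. (norm (u t))\<^sup>2)" and Iu: "(LINT t|lborel. (norm (u t))\<^sup>2) = s"
    unfolding u_def s_def using norm2_sum[OF orth L2 fin] by auto
  have ie: "integrable lborel (\<lambda>t. (norm (e j t))\<^sup>2)" for j using L2 by (simp add: L2fun_def)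
  have iA: "integrable lborel (\<lambda>t. indicator A t * (norm (e j t))\<^sup>2)" for j
    using integrable_mult_indicator[OF _ ie, of A j] unfolding A_def by simp
  have iI: "integrable lborel (indicator {-T..T} :: real \<Rightarrow> real)"
    using T by (intro integrable_real_indicator) auto
  have iW: "integrable lborel (\<lambda>t. W t (u t))"
  proof (rule Bochner_Integration.integrable_bound[where f="\<lambda>t. \<bar>b1\<bar> * (norm (u t))\<^sup>2"])
    show "integrable lborel (\<lambda>t. \<bar>b1\<bar> * (norm (u t))\<^sup>2)" using iu by simp
    show "(\<lambda>t. W t (u t)) \<in> borel_measurable lborel" by (rule W_meas[OF C1 um])
    show "AE t in lborel. norm (W t (u t)) \<le> norm (\<bar>b1\<bar> * (norm (u t))\<^sup>2)"
      using W_bound[OF C1 W0 gb] by (intro AE_I2) simp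
  qed
  define g where "g = (\<lambda>t. K * (norm (u t))\<^sup>2 - K * R\<^sup>2 * indicator {-T..T} t
                        - K * s * (\<Sum>j\<in>S. indicator A t * (norm (e j t))\<^sup>2))"
  have ig: "integrable lborel g" unfolding g_def using iu iI iA by auto
  have Ig: "(LINT t|lborel. g t) = K * s - K * R\<^sup>2 * (2 * T)
        - K * s * (\<Sum>j\<in>S. LINT t|lborel. indicator A t * (norm (e j t))\<^sup>2)"
    unfolding g_def using iu iI iA T Iu
    by (simp add: Bochner_Integration.integral_sum Bochner_Integration.integral_diff)
  have pt: "g t \<le> W t (u t)" for t
  proof -
    have cs: "(norm (u t))\<^sup>2 \<le> s * E t"
      unfolding u_def s_def E_def by (rule cs_point)
    have E0: "E t \<ge> 0" unfolding E_def by (simp add: sum_nonneg)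
    have sumA: "(\<Sum>j\<in>S. indicator A t * (norm (e j t))\<^sup>2) = indicator A t * E t"
      unfolding E_def by (simp add: sum_distrib_left)
    have i1: "0 \<le> K * R\<^sup>2 * indicator {-T..T} t" using K by simp
    have i2: "0 \<le> K * s * (indicator A t * E t)" using K s0 E0 by simp
    show ?thesis
    proof (cases "norm (u t) \<ge> R")
      case True
      then have "W t (u t) \<ge> K * (norm (u t))\<^sup>2" using W5 by blast
      then show ?thesis unfolding g_def sumA using i1 i2 by linarith
    next
      case False
      have W0': "W t (u t) \<ge> 0" using Wnn by blast
      show ?thesis
      proof (cases "t \<in> A")
        case True
        have "K * (norm (u t))\<^sup>2 \<le> K * (s * E t)" using cs K by simp
        then show ?thesis unfolding g_def sumA using True i1 W0' by simp
      next
        case nA: False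
        then have "t \<in> {-T..T}" unfolding A_def by auto
        moreover have "(norm (u t))\<^sup>2 \<le> R\<^sup>2"
          using False norm_ge_zero[of "u t"] by (intro power_mono) auto
        then have "K * (norm (u t))\<^sup>2 \<le> K * R\<^sup>2" using K by simp
        ultimately show ?thesis unfolding g_def sumA using i2 W0' by simp
      qed
    qed
  qed
  have "(LINT t|lborel. g t) \<le> (LINT t|lborel. W t (u t))"
    by (rule integral_mono[OF ig iW]) (use pt in auto)
  then show ?thesis unfolding s_def[symmetric] A_def[symmetric] using Ig by (simp add: u_def)
qed

lemma lam_facts:
  fixes lam :: "nat \<Rightarrow> real"
  assumes mono: "mono lam" and lim: "filterlim lam at_top sequentially"
  shows "{n. lam n \<le> 0} = {..<nbar lam}" "lam (nbar lam) > 0"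
proof -
  from lim have "eventually (\<lambda>n. 1 \<le> lam n) sequentially"
    by (simp add: filterlim_at_top)
  then obtain N where "1 \<le> lam N" by (auto simp: eventually_sequentially)
  then have ex: "0 < lam N" by simp
  define m where "m = (LEAST n. 0 < lam n)"
  have lm: "0 < lam m" unfolding m_def by (rule LeastI[of _ N]) (rule ex)
  have P: "{n. lam n \<le> 0} = {..<m}"
  proof (intro set_eqI iffI)
    fix n assume "n \<in> {n. lam n \<le> 0}"
    then have "\<not> m \<le> n" using lm monoD[OF mono, of m n] by auto
    then show "n \<in> {..<m}" by simp
  next
    fix n assume "n \<in> {..<m}"
    then show "n \<in> {n. lam n \<le> 0}" unfolding m_def using not_less_Least by force
  qed
  have "nbar lam = m" unfolding nbar_def P by simp
  then show "{n. lam n \<le> 0} = {..<nbar lam}" "lam (nbar lam) > 0" using P lm by auto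
qed

lemma sum_upd:
  fixes k :: nat
  shows "(\<Sum>j\<in>{..k}. F j ((a(k:=z)) j)) = F k z + (\<Sum>j<k. F j (a j))"
proof -
  have "{..k} = insert k {..<k}" by auto
  then have "(\<Sum>j\<in>{..k}. F j ((a(k:=z)) j)) = F k z + (\<Sum>j<k. F j ((a(k:=z)) j))"
    by simp
  also have "(\<Sum>j<k. F j ((a(k:=z)) j)) = (\<Sum>j<k. F j (a j))"
    by (rule sum.cong) auto
  finally show ?thesis .
qed

theorem lemma2p5:
  fixes L :: "real \<Rightarrow> real^'N^'N"
    and W :: "real \<Rightarrow> real^'N \<Rightarrow> real"
    and gradW :: "real \<Rightarrow> real^'N \<Rightarrow> real^'N"
    and lam :: "nat \<Rightarrow> real"
    and e :: "nat \<Rightarrow> real \<Rightarrow> real^'N"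
    and rho0 :: real
  assumes L_cont: "continuous_on UNIV L"
    and L_sym: "\<forall>t. transpose (L t) = L t"
    and L1: "cond_L1 L"
    and L2: "cond_L2 L"
    and eig: "eigen_system L lam e"
    and W_C1: "C1_with_grad W gradW"
    and W1: "(\<forall>t. W t 0 = 0) \<and> (\<exists>b1. \<forall>t x. norm (gradW t x) \<le> b1 * norm x)"
    and W23: "\<exists>r1>0.
               (\<exists>b2>0. \<exists>\<mu>>1. \<forall>t x. norm x \<ge> r1 \<longrightarrow> Wtilde W gradW t x \<ge> b2 * norm x powr \<mu>) \<and>
               (\<exists>b3>0. \<forall>t x. norm x < r1 \<longrightarrow> Wtilde W gradW t x \<ge> - b3 * norm x)"
    and W4: "\<exists>r2>0. \<exists>\<sigma>0>0. \<forall>t x. norm x \<le> r2 \<longrightarrow>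
               \<bar>W t x\<bar> \<le> (lam (nbar lam) - \<sigma>0) / 2 * (norm x)\<^sup>2"
    and W5: "\<exists>\<epsilon>0>0. \<exists>rinf>0. \<forall>t x. norm x \<ge> rinf \<longrightarrow>
               W t x \<ge> (lam (nbar lam) / 2 + \<epsilon>0) * (norm x)\<^sup>2"
    and W6: "\<forall>t x. W t x \<ge> 0"
    and rho_pos: "rho0 > 0"
  shows "\<exists>\<rho>>rho0. \<forall>u\<in>boundaryQ lam e \<rho>. Ifun lam e W u \<le> 0"
proof -
  have orth: "\<forall>m n. (LINT t|lborel. e m t \<bullet> e n t) = (if m = n then 1 else 0)"
    and L2: "\<forall>n. L2fun (e n)" and mono: "mono lam" and lim: "filterlim lam at_top sequentially"
    using eig unfolding eigen_system_def eigenfun_def by blast+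
  define k where "k = nbar lam"
  have P: "{n. lam n \<le> 0} = {..<k}" and lk: "lam k > 0"
    using lam_facts[OF mono lim] unfolding k_def by auto
  have lneg: "lam n \<le> 0" if "n < k" for n using P that by (metis lessThan_iff mem_Collect_eq)
  have lpos: "lam n > 0" if "k \<le> n" for n using P that by (metis lessThan_iff mem_Collect_eq not_le)
  from W1 obtain b1 where W0: "\<forall>t. W t 0 = 0" and gb: "\<forall>t x. norm (gradW t x) \<le> b1 * norm x"
    by blast
  from W5 obtain \<epsilon>0 rinf where e0: "\<epsilon>0 > 0" and W5': "\<forall>t x. norm x \<ge> rinf \<longrightarrow>
               W t x \<ge> (lam k / 2 + \<epsilon>0) * (norm x)\<^sup>2"
    unfolding k_def by blast
  define K where "K = lam k / 2 + \<epsilon>0"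
  have K: "K > 0" unfolding K_def using lk e0 by simp
  have W5'': "\<forall>t x. norm x \<ge> rinf \<longrightarrow> W t x \<ge> K * (norm x)\<^sup>2"
    using W5' unfolding K_def by blast
  define \<tau>f where "\<tau>f = (\<lambda>i::nat. \<Sum>j\<in>{..k}. LINT t|lborel. indicator {t. real i < \<bar>t\<bar>} t * (norm (e j t))\<^sup>2)"
  have "\<tau>f \<longlonglongrightarrow> (\<Sum>j\<in>{..k}. 0)"
    unfolding \<tau>f_def by (intro tendsto_sum tail_lim) (use L2 in auto)
  then have \<tau>lim: "\<tau>f \<longlonglongrightarrow> 0" by simp
  define \<delta> where "\<delta> = \<epsilon>0 / (2 * K)"
  have \<delta>: "\<delta> > 0" unfolding \<delta>_def using e0 K by simp
  from order_tendstoD(2)[OF \<tau>lim \<delta>] obtain N where "\<forall>n\<ge>N. \<tau>f n < \<delta>"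
    by (auto simp: eventually_sequentially)
  then have \<tau>N: "\<tau>f N < \<delta>" by simp
  define T where "T = real N"
  define \<tau> where "\<tau> = (\<Sum>j\<in>{..k}. LINT t|lborel. indicator {t. T < \<bar>t\<bar>} t * (norm (e j t))\<^sup>2)"
  have \<tau>d: "\<tau> \<le> \<delta>" using \<tau>N unfolding \<tau>_def \<tau>f_def T_def by simp
  have T0: "T \<ge> 0" unfolding T_def by simp
  have K\<tau>: "K * \<tau> \<le> \<epsilon>0 / 2"
  proof -
    have "K * \<tau> \<le> K * \<delta>" using \<tau>d K by simp
    also have "\<dots> = \<epsilon>0 / 2" unfolding \<delta>_def using K by simp
    finally show ?thesis .
  qed
  define Cm where "Cm = 1 + (\<Sum>n<k. \<bar>lam n\<bar>)"
  have Cm1: "Cm \<ge> 1" unfolding Cm_def by (simp add: sum_nonneg)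
  define X where "X = 4 * K * rinf\<^sup>2 * T / \<epsilon>0"
  have X0: "X \<ge> 0" unfolding X_def using K T0 e0 by simp
  define \<rho> where "\<rho> = rho0 + 1 + Cm * X"
  have \<rho>1: "\<rho> \<ge> 1" and \<rho>X: "\<rho> \<ge> Cm * X" and \<rho>gt: "\<rho> > rho0"
  proof -
    have "Cm * X \<ge> 0" using Cm1 X0 by simp
    then show "\<rho> \<ge> 1" "\<rho> \<ge> Cm * X" "\<rho> > rho0" unfolding \<rho>_def using rho_pos by linarith+
  qed

  have cf: "coef e (\<lambda>t. \<Sum>j\<in>{..k}. b j *\<^sub>R e j t) n = (if n \<le> k then b n else 0)" for b n
    using coef_sum[OF orth L2, of "{..k}" b n] by simp
  have cfv: "coef e (\<lambda>t. \<Sum>j\<in>{..<k}. a j *\<^sub>R e j t) n = (if n < k then a n else 0)" for a n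
    using coef_sum[OF orth L2, of "{..<k}" a n] by simp
  have Ep: "Enorm_plus_sq lam e (\<lambda>t. \<Sum>j\<in>{..k}. b j *\<^sub>R e j t) = lam k * (b k)\<^sup>2" for b
  proof -
    have "Enorm_plus_sq lam e (\<lambda>t. \<Sum>j\<in>{..k}. b j *\<^sub>R e j t)
        = (\<Sum>n\<in>{k}. if lam n > 0 then lam n * (coef e (\<lambda>t. \<Sum>j\<in>{..k}. b j *\<^sub>R e j t) n)\<^sup>2 else 0)"
      unfolding Enorm_plus_sq_def
    proof (rule suminf_finite)
      fix n assume "n \<notin> {k}"
      then show "(if lam n > 0 then lam n * (coef e (\<lambda>t. \<Sum>j\<in>{..k}. b j *\<^sub>R e j t) n)\<^sup>2 else 0) = 0"
        using lneg[of n] by (auto simp: cf)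
    qed simp
    then show ?thesis using lk by (simp add: cf)
  qed
  have Em: "Enorm_minus_sq lam e (\<lambda>t. \<Sum>j\<in>{..k}. b j *\<^sub>R e j t) \<ge> 0" for b
  proof -
    have "Enorm_minus_sq lam e (\<lambda>t. \<Sum>j\<in>{..k}. b j *\<^sub>R e j t)
        = (\<Sum>n<k. if lam n < 0 then \<bar>lam n\<bar> * (coef e (\<lambda>t. \<Sum>j\<in>{..k}. b j *\<^sub>R e j t) n)\<^sup>2 else 0)"
      unfolding Enorm_minus_sq_def
    proof (rule suminf_finite)
      fix n assume "n \<notin> {..<k}"
      then show "(if lam n < 0 then \<bar>lam n\<bar> * (coef e (\<lambda>t. \<Sum>j\<in>{..k}. b j *\<^sub>R e j t) n)\<^sup>2 else 0) = 0"
        using lpos[of n] by auto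
    qed simp
    also have "\<dots> \<ge> 0" by (intro sum_nonneg) (auto intro!: mult_nonpos_nonneg)
    finally show ?thesis .
  qed
  have Ifun_eq: "Ifun lam e W (\<lambda>t. \<Sum>j\<in>{..k}. b j *\<^sub>R e j t) \<le>
      lam k / 2 * (b k)\<^sup>2 - (LINT t|lborel. W t (\<Sum>j\<in>{..k}. b j *\<^sub>R e j t))" for b
    unfolding Ifun_def Ep using Em[of b] by simp
  have Wint0: "(LINT t|lborel. W t (\<Sum>j\<in>{..k}. b j *\<^sub>R e j t)) \<ge> 0" for b
    using W6 by (intro integral_nonneg_AE AE_I2) auto
  have I0: "Ifun lam e W (\<lambda>t. \<Sum>j\<in>{..k}. b j *\<^sub>R e j t) \<le> 0" if "b k = 0" for b
    using Ifun_eq[of b] Wint0[of b] that by simp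
  have Ibig: "Ifun lam e W (\<lambda>t. \<Sum>j\<in>{..k}. b j *\<^sub>R e j t) \<le>
       2 * K * rinf\<^sup>2 * T - \<epsilon>0 / 2 * (\<Sum>j\<in>{..k}. (b j)\<^sup>2)" for b
  proof -
    define s where "s = (\<Sum>j\<in>{..k}. (b j)\<^sup>2)"
    have s0: "s \<ge> 0" unfolding s_def by (simp add: sum_nonneg)
    have bk: "(b k)\<^sup>2 \<le> s" unfolding s_def by (rule member_le_sum) auto
    have WL: "(LINT t|lborel. W t (\<Sum>j\<in>{..k}. b j *\<^sub>R e j t)) \<ge> K * s - K * rinf\<^sup>2 * (2 * T) - K * s * \<tau>"
      unfolding s_def \<tau>_def
      by (rule W_lower[OF orth L2 W_C1 W0 gb]) (use W6 W5'' K T0 in auto)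
    have a1: "lam k / 2 * (b k)\<^sup>2 \<le> lam k / 2 * s" using bk lk by simp
    have a2: "K * s * \<tau> \<le> \<epsilon>0 / 2 * s" using K\<tau> s0
      by (metis mult.commute mult.left_commute mult_right_mono)
    have "Ifun lam e W (\<lambda>t. \<Sum>j\<in>{..k}. b j *\<^sub>R e j t) \<le> lam k / 2 * s - (K * s - K * rinf\<^sup>2 * (2 * T) - K * s * \<tau>)"
      using Ifun_eq[of b] WL a1 by linarith
    also have "\<dots> \<le> 2 * K * rinf\<^sup>2 * T - \<epsilon>0 / 2 * s"
      using a2 unfolding K_def by (simp add: algebra_simps)
    finally show ?thesis unfolding s_def .
  qed
  have Enb: "(Enorm lam e (\<lambda>t. \<Sum>j\<in>{..<k}. a j *\<^sub>R e j t))\<^sup>2 \<le> Cm * (\<Sum>j<k. (a j)\<^sup>2)" for a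
  proof -
    let ?v = "\<lambda>t. \<Sum>j\<in>{..<k}. a j *\<^sub>R e j t"
    have S1: "(\<Sum>n. \<bar>lam n\<bar> * (coef e ?v n)\<^sup>2) = (\<Sum>n<k. \<bar>lam n\<bar> * (a n)\<^sup>2)"
      by (subst suminf_finite[where N="{..<k}"]) (auto simp: cfv)
    have S2a: "(\<Sum>n. if lam n = 0 then (coef e ?v n)\<^sup>2 else 0) = (\<Sum>n<k. if lam n = 0 then (coef e ?v n)\<^sup>2 else 0)"
      by (subst suminf_finite[where N="{..<k}"]) (auto simp: cfv)
    have S2b: "(\<Sum>n<k. if lam n = 0 then (coef e ?v n)\<^sup>2 else 0) = (\<Sum>n<k. if lam n = 0 then (a n)\<^sup>2 else 0)"
      by (rule sum.cong) (simp_all add: cfv)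
    have S2: "(\<Sum>n. if lam n = 0 then (coef e ?v n)\<^sup>2 else 0) = (\<Sum>n<k. if lam n = 0 then (a n)\<^sup>2 else 0)"
      using S2a S2b by simp
    have le: "(\<Sum>n<k. \<bar>lam n\<bar> * (a n)\<^sup>2) + (\<Sum>n<k. if lam n = 0 then (a n)\<^sup>2 else 0)
        \<le> (\<Sum>n<k. Cm * (a n)\<^sup>2)"
      unfolding sum.distrib[symmetric]
    proof (rule sum_mono)
      fix n assume n: "n \<in> {..<k}"
      have "\<bar>lam n\<bar> \<le> (\<Sum>n<k. \<bar>lam n\<bar>)" by (rule member_le_sum) (use n in auto)
      then have "\<bar>lam n\<bar> + 1 \<le> Cm" unfolding Cm_def by simp
      then have h: "(\<bar>lam n\<bar> + 1) * (a n)\<^sup>2 \<le> Cm * (a n)\<^sup>2" by (simp add: mult_right_mono)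
      have h2: "(\<bar>lam n\<bar> + 1) * (a n)\<^sup>2 = \<bar>lam n\<bar> * (a n)\<^sup>2 + (a n)\<^sup>2" by (simp add: distrib_right)
      have h3: "(if lam n = 0 then (a n)\<^sup>2 else 0) \<le> (a n)\<^sup>2" by simp
      show "\<bar>lam n\<bar> * (a n)\<^sup>2 + (if lam n = 0 then (a n)\<^sup>2 else 0) \<le> Cm * (a n)\<^sup>2"
        using h h2 h3 by linarith
    qed
    have nn: "0 \<le> (\<Sum>n<k. \<bar>lam n\<bar> * (a n)\<^sup>2) + (\<Sum>n<k. if lam n = 0 then (a n)\<^sup>2 else 0)"
      by (intro add_nonneg_nonneg sum_nonneg) auto
    show ?thesis unfolding Enorm_def S1 S2 using nn le by (simp add: sum_distrib_left)
  qed
  have conv: "(\<lambda>t. z *\<^sub>R e k t + (\<Sum>j\<in>{..<k}. a j *\<^sub>R e j t)) = (\<lambda>t. \<Sum>j\<in>{..k}. (a(k:=z)) j *\<^sub>R e j t)" for z a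
    using sum_upd[of "\<lambda>j c. c *\<^sub>R e j _"] by simp
  have conv0: "(\<lambda>t. \<Sum>j\<in>{..<k}. a j *\<^sub>R e j t) = (\<lambda>t. \<Sum>j\<in>{..k}. (a(k:=0)) j *\<^sub>R e j t)" for a
    using conv[of 0 a] by simp
  have ssum: "(\<Sum>j\<in>{..k}. ((a(k:=z)) j)\<^sup>2) = z\<^sup>2 + (\<Sum>j<k. (a j)\<^sup>2)" for z a
    using sum_upd[of "\<lambda>j c. c\<^sup>2"] by simp
  have fin: "Ifun lam e W (\<lambda>t. \<Sum>j\<in>{..k}. (a(k:=z)) j *\<^sub>R e j t) \<le> 0"
    if "\<rho>\<^sup>2 \<le> Cm * (z\<^sup>2 + (\<Sum>j<k. (a j)\<^sup>2))" for z a
  proof -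
    define s where "s = z\<^sup>2 + (\<Sum>j<k. (a j)\<^sup>2)"
    have "\<rho>\<^sup>2 \<ge> \<rho>" using \<rho>1 by (simp add: power2_eq_square)
    then have "Cm * X \<le> Cm * s" using that \<rho>X unfolding s_def by linarith
    then have "X \<le> s" using Cm1 by simp
    then have "\<epsilon>0 / 2 * X \<le> \<epsilon>0 / 2 * s" using e0 by simp
    moreover have "\<epsilon>0 / 2 * X = 2 * K * rinf\<^sup>2 * T" unfolding X_def using e0 by simp
    ultimately show ?thesis using Ibig[of "a(k:=z)"] unfolding ssum s_def by linarith
  qed
  show ?thesis
  proof (intro exI conjI ballI)
    show "\<rho> > rho0" by (rule \<rho>gt)
    fix u assume "u \<in> boundaryQ lam e \<rho>"
    then consider (c1) a where "u = (\<lambda>t. \<Sum>j\<in>{..<k}. a j *\<^sub>R e j t)"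
      | (c2) a where "u = (\<lambda>t. \<rho> *\<^sub>R e k t + (\<Sum>j\<in>{..<k}. a j *\<^sub>R e j t))"
          "Enorm lam e (\<lambda>t. \<Sum>j\<in>{..<k}. a j *\<^sub>R e j t) \<le> \<rho>"
      | (c3) a z where "u = (\<lambda>t. z *\<^sub>R e k t + (\<Sum>j\<in>{..<k}. a j *\<^sub>R e j t))"
          "Enorm lam e (\<lambda>t. \<Sum>j\<in>{..<k}. a j *\<^sub>R e j t) = \<rho>"
      unfolding boundaryQ_def Eminus0_def P k_def[symmetric] by blast
    then show "Ifun lam e W u \<le> 0"
    proof cases
      case (c1 a)
      then show ?thesis using I0[of "a(k:=0)"] conv0[of a] by simp
    next
      case (c2 a)
      have "\<rho>\<^sup>2 \<le> Cm * (\<rho>\<^sup>2 + (\<Sum>j<k. (a j)\<^sup>2))"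
      proof -
        have "\<rho>\<^sup>2 \<le> \<rho>\<^sup>2 + (\<Sum>j<k. (a j)\<^sup>2)" by (simp add: sum_nonneg)
        also have "\<dots> \<le> Cm * (\<rho>\<^sup>2 + (\<Sum>j<k. (a j)\<^sup>2))"
        proof -
          have nn: "0 \<le> \<rho>\<^sup>2 + (\<Sum>j<k. (a j)\<^sup>2)" by (simp add: sum_nonneg)
          show ?thesis using mult_right_mono[OF Cm1 nn] by simp
        qed
        finally show ?thesis .
      qed
      then show ?thesis using fin[of \<rho> a] c2(1) conv[of \<rho> a] by simp
    next
      case (c3 a z)
      have "\<rho>\<^sup>2 \<le> Cm * (\<Sum>j<k. (a j)\<^sup>2)" using Enb[of a] c3(2) by simp
      also have "\<dots> \<le> Cm * (z\<^sup>2 + (\<Sum>j<k. (a j)\<^sup>2))" using Cm1 by simp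
      finally show ?thesis using fin[of z a] c3(1) conv[of z a] by simp
    qed
  qed
qed

end
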